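(* Let $2\le k<n$ be integers. For a probability vector $\lambda=(\lambda_1,\ldots,\lambda_n)$ define $\rho^P(\lambda)\in\mathbb{R}^n$ by $\rho^P(\lambda)_i=\frac1k\sum_{j=i}^{i+k-1}\lambda_j$, indices modulo $n$. Then every fiber of the map $\lambda\mapsto\rho^P(\lambda)$ (on probability vectors) that contains a pure state is a singleton; that is, if $e_m$ is a standard basis vector and $\mu$ is a probability vector with $\rho^P(\mu)=\rho^P(e_m)$, then $\mu=e_m$.
   Context: Probability vectors in $\mathbb{R}^n$ are identified with diagonal density matrices $\mathrm{diag}(\lambda_1,\dots,\lambda_n)$; the pure states among them are the standard basis vectors $e_m$ (i.e. $E_{mm}$). The map is the one induced by the POVM $(\tfrac1kQ_i)_{i=1}^n$, $Q_i$ the diagonal matrix with $1$ in positions $i,\ldots,i+k-1$ mod $n$. *)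

theory Defs
  imports Complex_Main
begin

text \<open>Vectors in R^n are represented as functions nat => real, using 0-based
indices 0..n-1 (only the values on 0..<n matter).\<close>

definition prob_vec :: "nat \<Rightarrow> (nat \<Rightarrow> real) \<Rightarrow> bool" where
  "prob_vec n lam \<longleftrightarrow> (\<forall>i<n. 0 \<le> lam i) \<and> (\<Sum>i<n. lam i) = 1"

definition rhoP :: "nat \<Rightarrow> nat \<Rightarrow> (nat \<Rightarrow> real) \<Rightarrow> nat \<Rightarrow> real" where
  "rhoP n k lam i = (1 / real k) * (\<Sum>j=i..<i+k. lam (j mod n))"

definition std_basis :: "nat \<Rightarrow> nat \<Rightarrow> real" where
  "std_basis m i = (if i = m then 1 else 0)"

end

theory Submission
  imports Defs
begin

lemma win_shift: "(\<Sum>j=i..<i+k. f (j mod n)) = (\<Sum>t<k. f ((i+t) mod (n::nat)))"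
  by (induction k) auto

lemma zero_off:
  assumes "m < n" "1 \<le> e" "e + k \<le> n" "2 \<le> k" "k < n"
  shows "rhoP n k (std_basis m) ((m+e) mod n) = 0"
proof -
  have "\<And>t. t < k \<Longrightarrow> std_basis m (((m+e) mod n + t) mod n) = 0"
  proof -
    fix t assume t: "t < k"
    have "((m+e) mod n + t) mod n = (m + (e+t)) mod n" by (simp add: mod_add_left_eq add.assoc)
    moreover have "(m + (e+t)) mod n \<noteq> m"
    proof
      assume h: "(m + (e+t)) mod n = m"
      have "(m + (e+t)) mod n = m mod n" using h assms by simp
      hence "n dvd (e+t)" using mod_eq_dvd_iff_nat[of m "m+(e+t)" n] by simp
      hence "e + t = 0 \<or> n \<le> e+t" using dvd_imp_le by blast
      thus False using assms t by auto
    qed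
    ultimately show "std_basis m (((m+e) mod n + t) mod n) = 0" by (simp add: std_basis_def)
  qed
  thus ?thesis unfolding rhoP_def win_shift by simp
qed

theorem proposition5p3:
  fixes n k m :: nat and mu :: "nat \<Rightarrow> real"
  assumes "2 \<le> k" and "k < n" and "m < n"
    and "prob_vec n mu"
    and "\<forall>i<n. rhoP n k mu i = rhoP n k (std_basis m) i"
  shows "\<forall>i<n. mu i = std_basis m i"
proof -
  have nn: "\<forall>i<n. 0 \<le> mu i" and s1: "(\<Sum>i<n. mu i) = 1" using assms(4) by (auto simp: prob_vec_def)
  have z: "mu j = 0" if j: "j < n" "j \<noteq> m" for j
  proof -
    define d where "d = (j + n - m) mod n"
    have dj: "(m + d) mod n = j"
    proof -
      have "(m + (j + n - m) mod n) mod n = (m + (j+n-m)) mod n" by (simp add: mod_add_right_eq)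
      also have "m + (j+n-m) = j + n" using assms(3) by simp
      finally show ?thesis using j d_def by simp
    qed
    have d0: "d \<noteq> 0" proof assume "d = 0" thus False using dj j assms(3) by simp qed
    have dn: "d < n" unfolding d_def using assms by simp
    define e where "e = min d (n-k)"
    define t where "t = d - e"
    have e1: "1 \<le> e" "e + k \<le> n" using d0 assms unfolding e_def by auto
    have tk: "t < k" using dn e1 unfolding t_def e_def using assms(1,2) by (auto simp: min_def)
    have "rhoP n k mu ((m+e) mod n) = 0"
      using assms(5) zero_off[OF assms(3) e1 assms(1,2)] by (metis mod_less_divisor assms(3) gr_zeroI less_zeroE)
    hence S: "(\<Sum>t<k. mu (((m+e) mod n + t) mod n)) = 0"
      unfolding rhoP_def win_shift using assms(1) by simp
    have "\<forall>t\<in>{..<k}. mu (((m+e) mod n + t) mod n) = 0"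
      using S nn by (subst sum_nonneg_eq_0_iff[symmetric]) (use assms(3) in auto)
    hence "mu (((m+e) mod n + t) mod n) = 0" using tk by simp
    moreover have "((m+e) mod n + t) mod n = j"
    proof -
      have "e + t = d" unfolding t_def e_def by simp
      have "((m+e) mod n + t) mod n = (m + (e + t)) mod n" by (simp add: mod_add_left_eq add.assoc)
      also have "\<dots> = j" using dj \<open>e + t = d\<close> by simp
      finally show ?thesis .
    qed
    ultimately show ?thesis by simp
  qed
  have "(\<Sum>i<n. mu i) = mu m"
    using z assms(3) by (subst sum.remove[of _ m]) (auto intro: sum.neutral)
  hence "mu m = 1" using s1 by simp
  thus ?thesis using z by (auto simp: std_basis_def)
qed

end
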